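(* For all integers $k,l\ge2$, $La^*([k]\times[l],\vee_3)=2(k+l)-4$.
   Context: $[k]\times[l]$ is ordered coordinatewise. $\vee_3$ is the poset on four elements $a,b_1,b_2,b_3$ whose only relations are $a<b_i$, $i=1,2,3$. For posets $P,R$, $P$ is a strong subposet of $R$ if there is an injection $i:P\to R$ with $p\le_P p'\iff i(p)\le_R i(p')$. A subset $F\subseteq Q$ is strong $P$-free if $P$ is not a strong subposet of $F$ with the induced order; $La^*(Q,P)$ is the maximum size of a strong $P$-free subset of $Q$. *)

theory Defs
  imports Main
begin

definition strong_subposet ::
  "'a set \<Rightarrow> ('a \<Rightarrow> 'a \<Rightarrow> bool) \<Rightarrow> 'b set \<Rightarrow> ('b \<Rightarrow> 'b \<Rightarrow> bool) \<Rightarrow> bool" where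
  "strong_subposet P leP R leR \<longleftrightarrow>
     (\<exists>i. inj_on i P \<and> i ` P \<subseteq> R \<and>
          (\<forall>p\<in>P. \<forall>p'\<in>P. leP p p' \<longleftrightarrow> leR (i p) (i p')))"

definition strong_free ::
  "'a set \<Rightarrow> ('a \<Rightarrow> 'a \<Rightarrow> bool) \<Rightarrow> 'b set \<Rightarrow> ('b \<Rightarrow> 'b \<Rightarrow> bool) \<Rightarrow> bool" where
  "strong_free P leP F leQ \<longleftrightarrow> \<not> strong_subposet P leP F leQ"

definition La_star ::
  "'b set \<Rightarrow> ('b \<Rightarrow> 'b \<Rightarrow> bool) \<Rightarrow> 'a set \<Rightarrow> ('a \<Rightarrow> 'a \<Rightarrow> bool) \<Rightarrow> nat" where
  "La_star Q leQ P leP = Max {card F | F. F \<subseteq> Q \<and> strong_free P leP F leQ}"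

definition grid :: "nat \<Rightarrow> nat \<Rightarrow> (nat \<times> nat) set" where
  "grid k l = {1..k} \<times> {1..l}"

definition grid_le :: "nat \<times> nat \<Rightarrow> nat \<times> nat \<Rightarrow> bool" where
  "grid_le x y \<longleftrightarrow> fst x \<le> fst y \<and> snd x \<le> snd y"

text \<open>The poset V_3: a = 0, b_i = i (i = 1,2,3); only relations a < b_i (plus reflexivity).\<close>
definition vee3 :: "nat set" where
  "vee3 = {0, 1, 2, 3}"

definition vee3_le :: "nat \<Rightarrow> nat \<Rightarrow> bool" where
  "vee3_le x y \<longleftrightarrow> x = y \<or> x = 0"

end

theory Submission
  imports Defs
begin

definition v3free :: "(nat \<times> nat) set \<Rightarrow> bool" where
 "v3free F \<longleftrightarrow> \<not>(\<exists>a\<in>F. \<exists>b1\<in>F. \<exists>b2\<in>F. \<exists>b3\<in>F. grid_le a b1 \<and> grid_le a b2 \<and> grid_le a b3 \<and>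
     a \<noteq> b1 \<and> a \<noteq> b2 \<and> a \<noteq> b3 \<and> \<not> grid_le b1 b2 \<and> \<not> grid_le b2 b1 \<and>
     \<not> grid_le b1 b3 \<and> \<not> grid_le b3 b1 \<and> \<not> grid_le b2 b3 \<and> \<not> grid_le b3 b2)"

lemma grid_le_refl: "grid_le p p" by (simp add: grid_le_def)

lemma grid_le_antisym: "grid_le p q \<Longrightarrow> grid_le q p \<Longrightarrow> p = q"
  by (cases p; cases q) (auto simp: grid_le_def)

lemma sf_iff: "strong_free vee3 vee3_le F grid_le \<longleftrightarrow> v3free F"
proof
  assume sf: "strong_free vee3 vee3_le F grid_le"
  show "v3free F"
  proof (rule ccontr)
    assume "\<not> v3free F"
    then obtain a b1 b2 b3 where ab: "a\<in>F" "b1\<in>F" "b2\<in>F" "b3\<in>F" "grid_le a b1" "grid_le a b2" "grid_le a b3"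
      "a \<noteq> b1" "a \<noteq> b2" "a \<noteq> b3" "\<not> grid_le b1 b2" "\<not> grid_le b2 b1"
     "\<not> grid_le b1 b3" "\<not> grid_le b3 b1" "\<not> grid_le b2 b3" "\<not> grid_le b3 b2"
      unfolding v3free_def by blast
    define i where "i = (\<lambda>n::nat. if n = 0 then a else if n = 1 then b1 else if n = 2 then b2 else b3)"
    have d: "b1 \<noteq> b2" "b1 \<noteq> b3" "b2 \<noteq> b3" using ab grid_le_refl by metis+
    have nb: "\<not> grid_le b1 a" "\<not> grid_le b2 a" "\<not> grid_le b3 a" using ab grid_le_antisym by metis+
    have "strong_subposet vee3 vee3_le F grid_le"
      unfolding strong_subposet_def
    proof (intro exI[of _ i] conjI)
      show "inj_on i vee3" unfolding inj_on_def vee3_def i_def using ab d by auto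
      show "i ` vee3 \<subseteq> F" unfolding vee3_def i_def using ab by auto
      show "\<forall>p\<in>vee3. \<forall>p'\<in>vee3. vee3_le p p' = grid_le (i p) (i p')"
        unfolding vee3_def i_def vee3_le_def using ab nb grid_le_refl by auto
    qed
    then show False using sf unfolding strong_free_def by blast
  qed
next
  assume v: "v3free F"
  show "strong_free vee3 vee3_le F grid_le"
    unfolding strong_free_def strong_subposet_def
  proof
    assume "\<exists>i. inj_on i vee3 \<and> i ` vee3 \<subseteq> F \<and> (\<forall>p\<in>vee3. \<forall>p'\<in>vee3. vee3_le p p' = grid_le (i p) (i p'))"
    then obtain i where i: "inj_on i vee3" "i ` vee3 \<subseteq> F" "\<forall>p\<in>vee3. \<forall>p'\<in>vee3. vee3_le p p' = grid_le (i p) (i p')"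
      by blast
    have mem: "i 0 \<in> F" "i 1 \<in> F" "i 2 \<in> F" "i 3 \<in> F" using i(2) unfolding vee3_def by auto
    have le: "\<And>p p'. p \<in> vee3 \<Longrightarrow> p' \<in> vee3 \<Longrightarrow> vee3_le p p' = grid_le (i p) (i p')" using i(3) by blast
    have ne: "i 0 \<noteq> i 1" "i 0 \<noteq> i 2" "i 0 \<noteq> i 3"
      using i(1) unfolding inj_on_def vee3_def by (metis insertCI zero_neq_numeral zero_neq_one)+
    have "grid_le (i 0) (i 1)" "grid_le (i 0) (i 2)" "grid_le (i 0) (i 3)"
      using le[of 0 1] le[of 0 2] le[of 0 3] by (auto simp: vee3_def vee3_le_def)
    moreover have "\<not> grid_le (i 1) (i 2)" "\<not> grid_le (i 2) (i 1)" "\<not> grid_le (i 1) (i 3)"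
       "\<not> grid_le (i 3) (i 1)" "\<not> grid_le (i 2) (i 3)" "\<not> grid_le (i 3) (i 2)"
      using le[of 1 2] le[of 2 1] le[of 1 3] le[of 3 1] le[of 2 3] le[of 3 2]
      by (auto simp: vee3_def vee3_le_def)
    ultimately show False using v mem ne unfolding v3free_def by blast
  qed
qed


lemma bex_img: "(\<exists>x\<in>f`A. P x) \<longleftrightarrow> (\<exists>y\<in>A. P (f y))" by blast

lemma v3free_subset: "G \<subseteq> F \<Longrightarrow> v3free F \<Longrightarrow> v3free G"
  unfolding v3free_def by blast

lemma v3free_embed:
  assumes emb: "\<And>p q. p \<in> A \<Longrightarrow> q \<in> A \<Longrightarrow> grid_le (f p) (f q) \<longleftrightarrow> grid_le p q"
    and v: "v3free A"
  shows "v3free (f ` A)"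
proof (rule ccontr)
  assume "\<not> v3free (f ` A)"
  then obtain a b1 b2 b3 where ab: "a\<in>A" "b1\<in>A" "b2\<in>A" "b3\<in>A" "grid_le (f a) (f b1)" "grid_le (f a) (f b2)" "grid_le (f a) (f b3)"
      "f a \<noteq> f b1" "f a \<noteq> f b2" "f a \<noteq> f b3" "\<not> grid_le (f b1) (f b2)" "\<not> grid_le (f b2) (f b1)"
     "\<not> grid_le (f b1) (f b3)" "\<not> grid_le (f b3) (f b1)" "\<not> grid_le (f b2) (f b3)" "\<not> grid_le (f b3) (f b2)"
    unfolding v3free_def by (simp only: bex_img not_not) blast
  then show False using v emb unfolding v3free_def by metis
qed

definition mrg :: "nat \<Rightarrow> nat \<times> nat \<Rightarrow> nat \<times> nat" where
  "mrg x0 p = (if fst p \<le> x0 then fst p else fst p - 1, snd p)"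

lemma mrg_mono: "grid_le p q \<Longrightarrow> grid_le (mrg x0 p) (mrg x0 q)"
  by (auto simp: grid_le_def mrg_def)

lemma mrg_refl: "grid_le (mrg x0 p) (mrg x0 q) \<Longrightarrow> fst p \<noteq> Suc x0 \<Longrightarrow> grid_le p q"
  by (auto simp: grid_le_def mrg_def split: if_splits)

lemma merge_v3free:
  assumes v: "v3free F" and c: "(x0, 1) \<in> F" and pos: "\<And>p. p \<in> F \<Longrightarrow> 1 \<le> snd p"
  shows "v3free (mrg x0 ` F)"
proof (rule ccontr)
  assume "\<not> v3free (mrg x0 ` F)"
  then obtain a b1 b2 b3 where ab: "a\<in>F" "b1\<in>F" "b2\<in>F" "b3\<in>F"
      "grid_le (mrg x0 a) (mrg x0 b1)" "grid_le (mrg x0 a) (mrg x0 b2)" "grid_le (mrg x0 a) (mrg x0 b3)"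
      "mrg x0 a \<noteq> mrg x0 b1" "mrg x0 a \<noteq> mrg x0 b2" "mrg x0 a \<noteq> mrg x0 b3"
      "\<not> grid_le (mrg x0 b1) (mrg x0 b2)" "\<not> grid_le (mrg x0 b2) (mrg x0 b1)"
     "\<not> grid_le (mrg x0 b1) (mrg x0 b3)" "\<not> grid_le (mrg x0 b3) (mrg x0 b1)"
     "\<not> grid_le (mrg x0 b2) (mrg x0 b3)" "\<not> grid_le (mrg x0 b3) (mrg x0 b2)"
    unfolding v3free_def by (simp only: bex_img not_not) blast
  have inc: "\<not> grid_le b1 b2" "\<not> grid_le b2 b1" "\<not> grid_le b1 b3" "\<not> grid_le b3 b1" "\<not> grid_le b2 b3" "\<not> grid_le b3 b2"
    using ab mrg_mono by metis+
  show False
  proof (cases "fst a = Suc x0")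
    case True
    have key: "grid_le (x0,1) b \<and> (x0,1) \<noteq> b" if "b \<in> F" "grid_le (mrg x0 a) (mrg x0 b)" "mrg x0 a \<noteq> mrg x0 b" for b
    proof -
      have "1 \<le> snd b" using pos that(1) by blast
      moreover have "x0 \<le> fst b" using that(2) True by (auto simp: grid_le_def mrg_def split: if_splits)
      moreover have "(x0,1) \<noteq> b"
      proof
        assume "(x0,1) = b"
        then have "snd a \<le> 1" using that(2) by (auto simp: grid_le_def mrg_def)
        then have "snd a = 1" using pos[OF ab(1)] by linarith
        then show False using that(3) True \<open>(x0,1) = b\<close> by (auto simp: mrg_def prod_eq_iff)
      qed
      ultimately show ?thesis by (auto simp: grid_le_def)
    qed
    have "grid_le (x0,1) b1 \<and> (x0,1) \<noteq> b1" "grid_le (x0,1) b2 \<and> (x0,1) \<noteq> b2" "grid_le (x0,1) b3 \<and> (x0,1) \<noteq> b3"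
      using key ab by blast+
    then show False using v c ab inc unfolding v3free_def by blast
  next
    case False
    have "grid_le a b1" "grid_le a b2" "grid_le a b3" using ab False mrg_refl by blast+
    moreover have "a \<noteq> b1" "a \<noteq> b2" "a \<noteq> b3" using ab by auto
    ultimately show False using v ab inc unfolding v3free_def by blast
  qed
qed


lemma three_elems:
  fixes S :: "nat set"
  assumes "finite S" "3 \<le> card S"
  shows "\<exists>y1\<in>S. \<exists>y2\<in>S. \<exists>y3\<in>S. y1 < y2 \<and> y2 < y3"
proof -
  have ne: "S \<noteq> {}" using assms by auto
  define y3 where "y3 = Max S"
  have y3: "y3 \<in> S" "\<forall>y\<in>S. y \<le> y3" using assms ne unfolding y3_def by auto
  define S' where "S' = S - {y3}"
  have cS': "2 \<le> card S'" "finite S'" using assms y3 unfolding S'_def by auto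
  then have neS': "S' \<noteq> {}" by auto
  define y2 where "y2 = Max S'"
  have y2: "y2 \<in> S'" "\<forall>y\<in>S'. y \<le> y2" using cS' neS' unfolding y2_def by auto
  define S'' where "S'' = S' - {y2}"
  have "1 \<le> card S''" using cS' y2 unfolding S''_def by auto
  then obtain y1 where y1: "y1 \<in> S''" by (metis card.empty all_not_in_conv not_one_le_zero)
  have "y1 < y2" using y1 y2 unfolding S''_def by force
  moreover have "y2 < y3" using y2 y3 unfolding S'_def by force
  moreover have "y1 \<in> S" "y2 \<in> S" using y1 y2 unfolding S''_def S'_def by auto
  ultimately show ?thesis using y3 by blast
qed

lemma card_grid: "card (grid k l) = k * l"
  unfolding grid_def by (simp add: card_cartesian_product)

lemma finite_grid: "finite (grid k l)"
  unfolding grid_def by simp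

lemma ub:
  "1 \<le> k \<Longrightarrow> 1 \<le> l \<Longrightarrow> 3 \<le> k + l \<Longrightarrow> F \<subseteq> grid k l \<Longrightarrow> v3free F \<Longrightarrow> card F + 4 \<le> 2*(k+l)"
proof (induction "k+l" arbitrary: k l F rule: less_induct)
  case less
  have finF: "finite F" using less.prems(4) finite_grid finite_subset by blast
  have cardF: "card F \<le> k * l" using card_mono[OF finite_grid less.prems(4)] card_grid by simp
  show ?case
  proof (cases "k = 1 \<or> l = 1")
    case True
    then show ?thesis using cardF less.prems(3) by auto
  next
    case False
    then have k2: "2 \<le> k" and l2: "2 \<le> l" using less.prems by auto
    have inF: "\<And>p. p \<in> F \<Longrightarrow> 1 \<le> fst p \<and> fst p \<le> k \<and> 1 \<le> snd p \<and> snd p \<le> l"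
      using less.prems(4) unfolding grid_def by auto
    define R1 where "R1 = {p\<in>F. snd p = 1}"
    have R1F: "R1 \<subseteq> F" unfolding R1_def by auto
    have finR1: "finite R1" using finF R1F finite_subset by blast
    show ?thesis
    proof (cases "card R1 \<le> 2")
      case True
      define G where "G = F - R1"
      define sh where "sh = (\<lambda>p::nat\<times>nat. (fst p, snd p - 1))"
      have Gy: "\<And>p. p \<in> G \<Longrightarrow> 2 \<le> snd p" using inF unfolding G_def R1_def by force
      have emb: "\<And>p q. p \<in> G \<Longrightarrow> q \<in> G \<Longrightarrow> grid_le (sh p) (sh q) \<longleftrightarrow> grid_le p q"
        using Gy unfolding sh_def grid_le_def by force
      have vG: "v3free G" using v3free_subset[OF _ less.prems(5)] unfolding G_def by blast
      have v': "v3free (sh ` G)" by (rule v3free_embed[OF emb vG])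
      have sub': "sh ` G \<subseteq> grid k (l-1)"
      proof
        fix q assume "q \<in> sh ` G"
        then obtain p where p: "p \<in> G" "q = sh p" by blast
        have "p \<in> F" using p(1) unfolding G_def by auto
        then show "q \<in> grid k (l-1)" using inF[of p] Gy[OF p(1)] p(2) unfolding sh_def grid_def by auto
      qed
      have inj: "inj_on sh G"
      proof (rule inj_onI)
        fix p q assume "p \<in> G" "q \<in> G" "sh p = sh q"
        then show "p = q" using Gy[of p] Gy[of q] unfolding sh_def by (auto simp: prod_eq_iff)
      qed
      have IH: "card (sh ` G) + 4 \<le> 2 * (k + (l-1))"
        using less.hyps[of k "l-1" "sh ` G"] k2 l2 sub' v' by auto
      have "card G = card F - card R1" unfolding G_def using card_Diff_subset[OF finR1 R1F] .
      moreover have "card R1 \<le> card F" using card_mono[OF finF R1F] .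
      moreover have "card (sh ` G) = card G" using card_image[OF inj] .
      moreover have "2 * (k + (l-1)) + 2 = 2*(k+l)" using l2 by simp
      ultimately show ?thesis using IH True by linarith
    next
      case False
      then have c3: "3 \<le> card R1" by simp
      have neR1: "R1 \<noteq> {}" using c3 by auto
      define x0 where "x0 = Min (fst ` R1)"
      have x0in: "x0 \<in> fst ` R1" unfolding x0_def using finR1 neR1 by auto
      have x0le: "\<And>p. p \<in> R1 \<Longrightarrow> x0 \<le> fst p" unfolding x0_def using finR1 by auto
      have c0: "(x0, 1) \<in> F" using x0in unfolding R1_def by force
      have injfst: "inj_on fst R1" unfolding inj_on_def R1_def by (auto simp: prod_eq_iff)
      have cfst: "3 \<le> card (fst ` R1)" using c3 card_image[OF injfst] by simp
      obtain x2 where x2: "(x2, 1) \<in> F" "x0 + 2 \<le> x2"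
      proof -
        have "\<not> fst ` R1 \<subseteq> {x0, Suc x0}"
        proof
          assume "fst ` R1 \<subseteq> {x0, Suc x0}"
          then have "card (fst ` R1) \<le> card {x0, Suc x0}" by (rule card_mono[rotated]) simp
          then show False using cfst by simp
        qed
        then obtain p where "p \<in> R1" "fst p \<noteq> x0" "fst p \<noteq> Suc x0" by blast
        moreover have "x0 \<le> fst p" using x0le calculation(1) .
        ultimately show ?thesis using that[of "fst p"] unfolding R1_def by (cases p) auto
      qed
      have x01: "1 \<le> x0" using inF[OF c0] by simp
      have k3: "x0 + 2 \<le> k" using inF[OF x2(1)] x2(2) by simp
      define Ov where "Ov = {y. (x0, y) \<in> F \<and> (Suc x0, y) \<in> F}"
      have finO: "finite Ov"
      proof -
        have "Ov \<subseteq> snd ` F"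
        proof
          fix y assume "y \<in> Ov"
          then have "(x0, y) \<in> F" unfolding Ov_def by blast
          then show "y \<in> snd ` F" by (metis image_eqI snd_conv)
        qed
        then show ?thesis using finF finite_subset by blast
      qed
      have cO: "card Ov \<le> 2"
      proof (rule ccontr)
        assume "\<not> card Ov \<le> 2"
        then obtain y1 y2 y3 where y: "y1 \<in> Ov" "y2 \<in> Ov" "y3 \<in> Ov" "y1 < y2" "y2 < y3"
          using three_elems[OF finO] by auto
        have m: "(x0, y3) \<in> F" "(Suc x0, y2) \<in> F" "(x0,1) \<in> F" "(x2,1) \<in> F"
          using y c0 x2 unfolding Ov_def by auto
        have "(x0, y1) \<in> F" using y(1) unfolding Ov_def by blast
        then have "1 \<le> y1" using inF by fastforce
        then have "\<not> v3free F" unfolding v3free_def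
          apply (simp only: not_not)
          apply (rule bexI[OF _ m(3)], rule bexI[OF _ m(1)], rule bexI[OF _ m(2)], rule bexI[OF _ m(4)])
          using y x2(2) by (auto simp: grid_le_def)
        then show False using less.prems(5) by blast
      qed
      define D where "D = (\<lambda>y. (Suc x0, y)) ` Ov"
      have DF: "D \<subseteq> F" unfolding D_def Ov_def by auto
      have cD: "card D \<le> 2" using card_image_le[OF finO, of "\<lambda>y. (Suc x0, y)"] cO unfolding D_def by simp
      have inj: "inj_on (mrg x0) (F - D)"
      proof (rule inj_onI)
        fix p q assume pq: "p \<in> F - D" "q \<in> F - D" "mrg x0 p = mrg x0 q"
        have sn: "snd p = snd q" using pq(3) unfolding mrg_def by (auto simp: prod_eq_iff)
        show "p = q"
        proof (cases "fst p \<le> x0 \<longleftrightarrow> fst q \<le> x0")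
          case True
          then show ?thesis using pq(3) sn unfolding mrg_def by (auto simp: prod_eq_iff split: if_splits)
        next
          case False
          then have "(fst p = x0 \<and> fst q = Suc x0) \<or> (fst q = x0 \<and> fst p = Suc x0)"
            using pq(3) unfolding mrg_def by (auto simp: prod_eq_iff split: if_splits)
          then show ?thesis
          proof
            assume h: "fst p = x0 \<and> fst q = Suc x0"
            have pe: "p = (x0, snd q)" using h sn by (cases p) auto
            have qe: "q = (Suc x0, snd q)" using h by (cases q) auto
            have "snd q \<in> Ov" using pq(1,2) pe qe unfolding Ov_def by (metis DiffD1 mem_Collect_eq)
            then have "q \<in> D" using qe unfolding D_def by blast
            then show ?thesis using pq by blast
          next
            assume h: "fst q = x0 \<and> fst p = Suc x0"
            have qe: "q = (x0, snd p)" using h sn by (cases q) auto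
            have pe: "p = (Suc x0, snd p)" using h by (cases p) auto
            have "snd p \<in> Ov" using pq(1,2) pe qe unfolding Ov_def by (metis DiffD1 mem_Collect_eq)
            then have "p \<in> D" using pe unfolding D_def by blast
            then show ?thesis using pq by blast
          qed
        qed
      qed
      have sub': "mrg x0 ` F \<subseteq> grid (k-1) l"
      proof
        fix q assume "q \<in> mrg x0 ` F"
        then obtain p where p: "p \<in> F" "q = mrg x0 p" by blast
        then show "q \<in> grid (k-1) l" using inF[OF p(1)] k3 x01 unfolding mrg_def grid_def by auto
      qed
      have pos: "\<And>p. p \<in> F \<Longrightarrow> 1 \<le> snd p" using inF by blast
      have v': "v3free (mrg x0 ` F)" using merge_v3free[OF less.prems(5) c0 pos] .
      have IH: "card (mrg x0 ` F) + 4 \<le> 2 * ((k-1) + l)"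
        using less.hyps[of "k-1" l "mrg x0 ` F"] k3 x01 l2 sub' v' by auto
      have "card (F - D) = card (mrg x0 ` (F - D))" using card_image[OF inj] by simp
      also have "\<dots> \<le> card (mrg x0 ` F)" by (rule card_mono) (use finF in auto)
      finally have "card (F - D) \<le> card (mrg x0 ` F)" .
      moreover have "card (F - D) = card F - card D" using card_Diff_subset[OF finite_subset[OF DF finF] DF] .
      moreover have "card D \<le> card F" using card_mono[OF finF DF] .
      moreover have "2 * ((k-1) + l) + 2 = 2*(k+l)" using k3 by simp
      ultimately show ?thesis using IH cD by linarith
    qed
  qed
qed


definition bd :: "nat \<Rightarrow> nat \<Rightarrow> (nat \<times> nat) set" where
  "bd k l = {p \<in> grid k l. fst p = 1 \<or> fst p = k \<or> snd p = 1 \<or> snd p = l}"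

lemma bd_eq: "bd k l = grid k l - ({2..k-1} \<times> {2..l-1})"
  unfolding bd_def grid_def by auto

lemma card_bd:
  assumes "2 \<le> k" "2 \<le> l"
  shows "card (bd k l) = 2 * (k + l) - 4"
proof -
  have sub: "{2..k-1} \<times> {2..l-1} \<subseteq> grid k l" unfolding grid_def by auto
  have "card (bd k l) = card (grid k l) - card ({2..k-1} \<times> {2..l-1})"
    unfolding bd_eq by (rule card_Diff_subset) (use sub in \<open>auto simp: finite_grid\<close>)
  also have "\<dots> = k * l - (k-2) * (l-2)" by (simp add: card_grid card_cartesian_product numeral_2_eq_2)
  also have "\<dots> = 2 * (k + l) - 4"
  proof -
    obtain a b where "k = a + 2" "l = b + 2" using assms by (metis add.commute le_Suc_ex)
    then show ?thesis by (simp add: algebra_simps)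
  qed
  finally show ?thesis .
qed

lemma bd_chain1:
  assumes "p \<in> bd k l" "q \<in> bd k l" "fst p = 1 \<or> snd p = l" "fst q = 1 \<or> snd q = l"
  shows "grid_le p q \<or> grid_le q p"
  using assms unfolding bd_def grid_def grid_le_def by auto

lemma bd_chain2:
  assumes "p \<in> bd k l" "q \<in> bd k l" "snd p = 1 \<or> fst p = k" "snd q = 1 \<or> fst q = k"
  shows "grid_le p q \<or> grid_le q p"
  using assms unfolding bd_def grid_def grid_le_def by auto

lemma bd_v3free: "v3free (bd k l)"
proof -
  have cls: "\<And>p. p \<in> bd k l \<Longrightarrow> (fst p = 1 \<or> snd p = l) \<or> (snd p = 1 \<or> fst p = k)"
    unfolding bd_def by auto
  show ?thesis unfolding v3free_def
  proof
    assume "\<exists>a\<in>bd k l. \<exists>b1\<in>bd k l. \<exists>b2\<in>bd k l. \<exists>b3\<in>bd k l. grid_le a b1 \<and> grid_le a b2 \<and> grid_le a b3 \<and>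
     a \<noteq> b1 \<and> a \<noteq> b2 \<and> a \<noteq> b3 \<and> \<not> grid_le b1 b2 \<and> \<not> grid_le b2 b1 \<and>
     \<not> grid_le b1 b3 \<and> \<not> grid_le b3 b1 \<and> \<not> grid_le b2 b3 \<and> \<not> grid_le b3 b2"
    then obtain b1 b2 b3 where b: "b1 \<in> bd k l" "b2 \<in> bd k l" "b3 \<in> bd k l"
      "\<not> grid_le b1 b2" "\<not> grid_le b2 b1" "\<not> grid_le b1 b3" "\<not> grid_le b3 b1" "\<not> grid_le b2 b3" "\<not> grid_le b3 b2"
      by blast
    show False
      using cls[OF b(1)] cls[OF b(2)] cls[OF b(3)] b
        bd_chain1[OF b(1) b(2)] bd_chain1[OF b(1) b(3)] bd_chain1[OF b(2) b(3)]
        bd_chain2[OF b(1) b(2)] bd_chain2[OF b(1) b(3)] bd_chain2[OF b(2) b(3)]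
      by blast
  qed
qed

theorem theorem1p5:
  fixes k l :: nat
  assumes "k \<ge> 2" and "l \<ge> 2"
  shows "La_star (grid k l) grid_le vee3 vee3_le = 2 * (k + l) - 4"
proof -
  define S where "S = {card F | F. F \<subseteq> grid k l \<and> strong_free vee3 vee3_le F grid_le}"
  have fin: "finite S"
  proof -
    have "S \<subseteq> {0..k*l}"
    proof
      fix n assume "n \<in> S"
      then obtain F where "n = card F" "F \<subseteq> grid k l" unfolding S_def by blast
      then show "n \<in> {0..k*l}" using card_mono[OF finite_grid] card_grid by fastforce
    qed
    then show ?thesis using finite_subset by blast
  qed
  have mem: "2 * (k + l) - 4 \<in> S"
  proof -
    have "bd k l \<subseteq> grid k l" unfolding bd_def by auto
    moreover have "strong_free vee3 vee3_le (bd k l) grid_le" using sf_iff bd_v3free by blast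
    ultimately show ?thesis unfolding S_def using card_bd[OF assms] by (metis (mono_tags, lifting) mem_Collect_eq)
  qed
  have le: "\<forall>n\<in>S. n \<le> 2 * (k + l) - 4"
  proof
    fix n assume "n \<in> S"
    then obtain F where F: "n = card F" "F \<subseteq> grid k l" "strong_free vee3 vee3_le F grid_le" unfolding S_def by blast
    have "card F + 4 \<le> 2 * (k + l)" using ub[of k l F] assms F(2) F(3) sf_iff by auto
    then show "n \<le> 2 * (k + l) - 4" using F(1) by linarith
  qed
  show ?thesis unfolding La_star_def S_def[symmetric] using Max_eqI[OF fin] le mem by blast
qed

end
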